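(* Let $R$ be a ring and $\mathfrak{p}$ a proper left ideal of $R$. Then: (1) $\mathfrak{p}$ is extremely prime iff $(\mathfrak{p}:b)\subseteq\mathfrak{p}$ for all $b\in R\setminus\mathfrak{p}$. (2) $\mathfrak{p}$ is completely prime iff $(\mathfrak{p}:b)=\mathfrak{p}$ for all $b\in R\setminus\mathfrak{p}$ such that $\mathfrak{p}\subseteq(\mathfrak{p}:b)$. (3) $\mathfrak{p}$ is structurally prime iff $\operatorname{id}((\mathfrak{p}:b))\subseteq\mathfrak{p}$ for all $b\in R\setminus\mathfrak{p}$. (4) $\mathfrak{p}$ is weakly prime iff $\operatorname{id}((\mathfrak{p}:b))\subseteq\mathfrak{p}$ for all $b\in R\setminus\mathfrak{p}$ such that $\mathfrak{p}R\subseteq(\mathfrak{p}:b)$.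
   Context: Rings are associative and unital, not necessarily commutative. For a left ideal $I$ and $a\in R$, $(I:a)=\{x\in R: xa\in I\}$ (a left ideal). For a left ideal $I$, $\operatorname{id}(I)$ denotes the largest two-sided ideal of $R$ contained in $I$. A left ideal $\mathfrak{p}\neq R$ is: extremely prime if $ab\in\mathfrak{p}$ implies $a\in\mathfrak{p}$ or $b\in\mathfrak{p}$ (for $a,b\in R$); completely prime if $ab\in\mathfrak{p}$ and $\mathfrak{p}b\subseteq\mathfrak{p}$ imply $a\in\mathfrak{p}$ or $b\in\mathfrak{p}$; structurally prime if for left ideals $A,B$, $AB\subseteq\mathfrak{p}$ implies $A\subseteq\mathfrak{p}$ or $B\subseteq\mathfrak{p}$; weakly prime if for left ideals $A,B$, $AB\subseteq\mathfrak{p}$ and $\mathfrak{p}B\subseteq\mathfrak{p}$ imply $A\subseteq\mathfrak{p}$ or $B\subseteq\mathfrak{p}$. *)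

theory Defs
  imports Main
begin

definition left_ideal :: "'a::ring_1 set \<Rightarrow> bool" where
  "left_ideal I \<longleftrightarrow> 0 \<in> I \<and> (\<forall>x\<in>I. \<forall>y\<in>I. x + y \<in> I) \<and> (\<forall>x\<in>I. - x \<in> I)
     \<and> (\<forall>r. \<forall>x\<in>I. r * x \<in> I)"

definition two_sided_ideal :: "'a::ring_1 set \<Rightarrow> bool" where
  "two_sided_ideal I \<longleftrightarrow> left_ideal I \<and> (\<forall>r. \<forall>x\<in>I. x * r \<in> I)"

inductive_set set_prod :: "'a::ring_1 set \<Rightarrow> 'a set \<Rightarrow> 'a set" for A B where
  zero: "0 \<in> set_prod A B"
| mult: "a \<in> A \<Longrightarrow> b \<in> B \<Longrightarrow> a * b \<in> set_prod A B"
| add: "x \<in> set_prod A B \<Longrightarrow> y \<in> set_prod A B \<Longrightarrow> x + y \<in> set_prod A B"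

definition rmult :: "'a::ring_1 set \<Rightarrow> 'a \<Rightarrow> 'a set" where
  "rmult I b = {x * b | x. x \<in> I}"

definition lcolon :: "'a::ring_1 set \<Rightarrow> 'a \<Rightarrow> 'a set" where
  "lcolon I a = {x. x * a \<in> I}"

text \<open>id(I): the largest two-sided ideal contained in I (the union of all two-sided ideals
  contained in I; it is itself the largest such ideal).\<close>
definition id_part :: "'a::ring_1 set \<Rightarrow> 'a set" where
  "id_part I = \<Union>{J. two_sided_ideal J \<and> J \<subseteq> I}"

definition extremely_prime :: "'a::ring_1 set \<Rightarrow> bool" where
  "extremely_prime P \<longleftrightarrow> left_ideal P \<and> P \<noteq> UNIV \<and>
     (\<forall>a b. a * b \<in> P \<longrightarrow> a \<in> P \<or> b \<in> P)"

definition completely_prime :: "'a::ring_1 set \<Rightarrow> bool" where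
  "completely_prime P \<longleftrightarrow> left_ideal P \<and> P \<noteq> UNIV \<and>
     (\<forall>a b. a * b \<in> P \<longrightarrow> rmult P b \<subseteq> P \<longrightarrow> a \<in> P \<or> b \<in> P)"

definition structurally_prime :: "'a::ring_1 set \<Rightarrow> bool" where
  "structurally_prime P \<longleftrightarrow> left_ideal P \<and> P \<noteq> UNIV \<and>
     (\<forall>A B. left_ideal A \<longrightarrow> left_ideal B \<longrightarrow> set_prod A B \<subseteq> P \<longrightarrow> A \<subseteq> P \<or> B \<subseteq> P)"

definition weakly_prime :: "'a::ring_1 set \<Rightarrow> bool" where
  "weakly_prime P \<longleftrightarrow> left_ideal P \<and> P \<noteq> UNIV \<and>
     (\<forall>A B. left_ideal A \<longrightarrow> left_ideal B \<longrightarrow> set_prod A B \<subseteq> P \<longrightarrow> set_prod P B \<subseteq> P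
        \<longrightarrow> A \<subseteq> P \<or> B \<subseteq> P)"

end

theory Submission
  imports Defs
begin

lemma set_prod_sub:
  assumes "0 \<in> C" "\<And>x y. x \<in> C \<Longrightarrow> y \<in> C \<Longrightarrow> x + y \<in> C"
    "\<And>a b. a \<in> A \<Longrightarrow> b \<in> B \<Longrightarrow> a * b \<in> C"
  shows "set_prod A B \<subseteq> C"
proof
  fix x assume "x \<in> set_prod A B"
  then show "x \<in> C" by induction (auto intro: assms)
qed

lemma set_prod_two_sided:
  assumes "left_ideal A"
  shows "two_sided_ideal (set_prod A UNIV)"
proof -
  have neg: "- x \<in> set_prod A UNIV" if "x \<in> set_prod A UNIV" for x
    using that
  proof induction
    case zero then show ?case by (simp add: set_prod.zero)
  next
    case (mult a b) then show ?case
      by (metis UNIV_I minus_mult_right set_prod.mult)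
  next
    case (add x y) then show ?case
      by (metis minus_add_distrib set_prod.add)
  qed
  have lm: "r * x \<in> set_prod A UNIV" if "x \<in> set_prod A UNIV" for x r
    using that
  proof induction
    case zero then show ?case by (simp add: set_prod.zero)
  next
    case (mult a b) then show ?case
      using assms unfolding left_ideal_def
      by (metis UNIV_I mult.assoc set_prod.mult)
  next
    case (add x y) then show ?case
      by (metis distrib_left set_prod.add)
  qed
  have rm: "x * r \<in> set_prod A UNIV" if "x \<in> set_prod A UNIV" for x r
    using that
  proof induction
    case zero then show ?case by (simp add: set_prod.zero)
  next
    case (mult a b) then show ?case
      by (metis UNIV_I mult.assoc set_prod.mult)
  next
    case (add x y) then show ?case
      by (metis distrib_right set_prod.add)
  qed
  show ?thesis unfolding two_sided_ideal_def left_ideal_def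
    using neg lm rm set_prod.zero set_prod.add by blast
qed

lemma sub_set_prod: "a \<in> A \<Longrightarrow> a \<in> set_prod A UNIV"
  by (metis UNIV_I mult.right_neutral set_prod.mult)

lemma left_ideal_range: "left_ideal (range (\<lambda>r. r * (b::'a::ring_1)))"
  unfolding left_ideal_def
proof (intro conjI ballI allI)
  show "0 \<in> range (\<lambda>r. r * b)" by (metis mult_zero_left rangeI)
  fix x y assume "x \<in> range (\<lambda>r. r * b)" "y \<in> range (\<lambda>r. r * b)"
  then obtain u v where "x = u * b" "y = v * b" by blast
  then show "x + y \<in> range (\<lambda>r. r * b)" by (metis distrib_right rangeI)
next
  fix x assume "x \<in> range (\<lambda>r. r * b)"
  then obtain u where "x = u * b" by blast
  then show "- x \<in> range (\<lambda>r. r * b)" by (metis minus_mult_left rangeI)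
next
  fix r x assume "x \<in> range (\<lambda>r. r * b)"
  then obtain u where "x = u * b" by blast
  then show "r * x \<in> range (\<lambda>r. r * b)" by (metis mult.assoc rangeI)
qed

lemma id_part_sub: "id_part I \<subseteq> P \<longleftrightarrow> (\<forall>J. two_sided_ideal J \<longrightarrow> J \<subseteq> I \<longrightarrow> J \<subseteq> P)"
  unfolding id_part_def by blast

lemma lcolon_closed:
  assumes "left_ideal P"
  shows "0 \<in> lcolon P b" "\<And>x y. x \<in> lcolon P b \<Longrightarrow> y \<in> lcolon P b \<Longrightarrow> x + y \<in> lcolon P b"
  using assms unfolding left_ideal_def lcolon_def by (auto simp: distrib_right)

lemma key_imp:
  assumes P: "left_ideal P" and J: "two_sided_ideal J" "J \<subseteq> lcolon P b"
  shows "set_prod J (range (\<lambda>r. r * b)) \<subseteq> P"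
proof (rule set_prod_sub)
  show "0 \<in> P" using P unfolding left_ideal_def by blast
  show "x + y \<in> P" if "x \<in> P" "y \<in> P" for x y using P that unfolding left_ideal_def by blast
  fix a c assume "a \<in> J" "c \<in> range (\<lambda>r. r * b)"
  then obtain r where c: "c = r * b" and "a * r \<in> J" using J unfolding two_sided_ideal_def by blast
  then show "a * c \<in> P" using J by (auto simp: lcolon_def mult.assoc)
qed

lemma notin_range: "b \<notin> P \<Longrightarrow> \<not> range (\<lambda>r. r * b) \<subseteq> (P::'a::ring_1 set)"
  by (metis mult_1 rangeI subsetD)

theorem proposition2p25:
  fixes P :: "'a::ring_1 set"
  assumes "left_ideal P" and "P \<noteq> UNIV"
  shows "(extremely_prime P \<longleftrightarrow> (\<forall>b. b \<notin> P \<longrightarrow> lcolon P b \<subseteq> P))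
     \<and> (completely_prime P \<longleftrightarrow>
          (\<forall>b. b \<notin> P \<longrightarrow> P \<subseteq> lcolon P b \<longrightarrow> lcolon P b = P))
     \<and> (structurally_prime P \<longleftrightarrow> (\<forall>b. b \<notin> P \<longrightarrow> id_part (lcolon P b) \<subseteq> P))
     \<and> (weakly_prime P \<longleftrightarrow>
          (\<forall>b. b \<notin> P \<longrightarrow> set_prod P UNIV \<subseteq> lcolon P b \<longrightarrow> id_part (lcolon P b) \<subseteq> P))"
proof (intro conjI)
  have P0: "0 \<in> P" and Padd: "\<And>x y. x \<in> P \<Longrightarrow> y \<in> P \<Longrightarrow> x + y \<in> P"
    and Pl: "\<And>r x. x \<in> P \<Longrightarrow> r * x \<in> P"
    using assms(1) unfolding left_ideal_def by blast+
  show "extremely_prime P \<longleftrightarrow> (\<forall>b. b \<notin> P \<longrightarrow> lcolon P b \<subseteq> P)"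
    using assms unfolding extremely_prime_def lcolon_def by blast
  have rm: "rmult P b \<subseteq> P \<longleftrightarrow> P \<subseteq> lcolon P b" for b
    unfolding rmult_def lcolon_def by blast
  show "completely_prime P \<longleftrightarrow> (\<forall>b. b \<notin> P \<longrightarrow> P \<subseteq> lcolon P b \<longrightarrow> lcolon P b = P)"
    using assms unfolding completely_prime_def rm unfolding lcolon_def by blast
  show "structurally_prime P \<longleftrightarrow> (\<forall>b. b \<notin> P \<longrightarrow> id_part (lcolon P b) \<subseteq> P)"
  proof
    assume sp: "structurally_prime P"
    show "\<forall>b. b \<notin> P \<longrightarrow> id_part (lcolon P b) \<subseteq> P"
    proof (intro allI impI)
      fix b assume b: "b \<notin> P"
      show "id_part (lcolon P b) \<subseteq> P" unfolding id_part_sub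
      proof (intro allI impI)
        fix J assume J: "two_sided_ideal J" "J \<subseteq> lcolon P b"
        have "set_prod J (range (\<lambda>r. r * b)) \<subseteq> P" using key_imp[OF assms(1) J] .
        moreover have "left_ideal J" using J two_sided_ideal_def by blast
        ultimately show "J \<subseteq> P" using sp left_ideal_range notin_range[OF b]
          unfolding structurally_prime_def by blast
      qed
    qed
  next
    assume H: "\<forall>b. b \<notin> P \<longrightarrow> id_part (lcolon P b) \<subseteq> P"
    show "structurally_prime P" unfolding structurally_prime_def
    proof (intro conjI allI impI assms)
      fix A B assume A: "left_ideal A" and B: "left_ideal (B::'a set)" and AB: "set_prod A B \<subseteq> P"
      show "A \<subseteq> P \<or> B \<subseteq> P"
      proof (rule ccontr)
        assume "\<not> (A \<subseteq> P \<or> B \<subseteq> P)"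
        then obtain b where bB: "b \<in> B" and b: "b \<notin> P" and nA: "\<not> A \<subseteq> P" by blast
        have "set_prod A UNIV \<subseteq> lcolon P b"
        proof (rule set_prod_sub[OF lcolon_closed[OF assms(1)]])
          fix a r assume "a \<in> A" "r \<in> (UNIV::'a set)"
          moreover have "r * b \<in> B" using B bB unfolding left_ideal_def by blast
          ultimately show "a * r \<in> lcolon P b" using AB set_prod.mult[of a A "r*b" B]
            by (auto simp: lcolon_def mult.assoc)
        qed
        then have "set_prod A UNIV \<subseteq> P" using H b set_prod_two_sided[OF A] id_part_sub by blast
        then show False using nA sub_set_prod by blast
      qed
    qed
  qed
  show "weakly_prime P \<longleftrightarrow>
          (\<forall>b. b \<notin> P \<longrightarrow> set_prod P UNIV \<subseteq> lcolon P b \<longrightarrow> id_part (lcolon P b) \<subseteq> P)"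
  proof
    assume sp: "weakly_prime P"
    show "\<forall>b. b \<notin> P \<longrightarrow> set_prod P UNIV \<subseteq> lcolon P b \<longrightarrow> id_part (lcolon P b) \<subseteq> P"
    proof (intro allI impI)
      fix b assume b: "b \<notin> P" and PR: "set_prod P UNIV \<subseteq> lcolon P b"
      have PB: "set_prod P (range (\<lambda>r. r * b)) \<subseteq> P"
      proof (rule set_prod_sub[OF P0 Padd])
        fix p c assume "p \<in> P" "c \<in> range (\<lambda>r. r * b)"
        then obtain r where "c = r * b" "p * r \<in> lcolon P b"
          using PR set_prod.mult[of p P _ UNIV] by blast
        then show "p * c \<in> P" by (auto simp: lcolon_def mult.assoc)
      qed
      show "id_part (lcolon P b) \<subseteq> P" unfolding id_part_sub
      proof (intro allI impI)
        fix J assume J: "two_sided_ideal J" "J \<subseteq> lcolon P b"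
        have "set_prod J (range (\<lambda>r. r * b)) \<subseteq> P" using key_imp[OF assms(1) J] .
        moreover have "left_ideal J" using J two_sided_ideal_def by blast
        ultimately show "J \<subseteq> P" using sp left_ideal_range notin_range[OF b] PB
          unfolding weakly_prime_def by blast
      qed
    qed
  next
    assume H: "\<forall>b. b \<notin> P \<longrightarrow> set_prod P UNIV \<subseteq> lcolon P b \<longrightarrow> id_part (lcolon P b) \<subseteq> P"
    show "weakly_prime P" unfolding weakly_prime_def
    proof (intro conjI allI impI assms)
      fix A B assume A: "left_ideal A" and B: "left_ideal (B::'a set)" and AB: "set_prod A B \<subseteq> P"
        and PB: "set_prod P B \<subseteq> P"
      show "A \<subseteq> P \<or> B \<subseteq> P"
      proof (rule ccontr)
        assume "\<not> (A \<subseteq> P \<or> B \<subseteq> P)"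
        then obtain b where bB: "b \<in> B" and b: "b \<notin> P" and nA: "\<not> A \<subseteq> P" by blast
        have gen: "set_prod X UNIV \<subseteq> lcolon P b" if XB: "set_prod X B \<subseteq> P" for X
        proof (rule set_prod_sub[OF lcolon_closed[OF assms(1)]])
          fix a r assume "a \<in> X" "r \<in> (UNIV::'a set)"
          moreover have "r * b \<in> B" using B bB unfolding left_ideal_def by blast
          ultimately show "a * r \<in> lcolon P b" using XB set_prod.mult[of a X "r*b" B]
            by (auto simp: lcolon_def mult.assoc)
        qed
        have "set_prod A UNIV \<subseteq> P" using H b gen[OF PB] gen[OF AB] set_prod_two_sided[OF A] id_part_sub by blast
        then show False using nA sub_set_prod by blast
      qed
    qed
  qed
qed

end
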